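(* Let $m\in\mathbb{N}$, $m\geq 2$, and let $T:[0,1)\to[0,1)$ be $T(x)=mx \bmod 1$. Let $A\subset[0,1)$ be a nowhere dense set with $T(A)\subset A$. Then for every $t\in(0,1)$ that has a universal $m$-adic expansion, we simultaneously have $$A-t\subset\mathbb{Q}^c,\qquad A+t\subset\mathbb{Q}^c,\qquad \frac{A}{t}\subset\mathbb{Q}^c.$$ Moreover, if $t\in(1,\infty)$ and $1/t$ has a universal $m$-adic expansion, then $tA\subset\mathbb{Q}^c$. In particular, for Lebesgue almost every $t\in(0,1)$ the inclusions $A-t\subset\mathbb{Q}^c$, $A+t\subset\mathbb{Q}^c$, $A/t\subset\mathbb{Q}^c$ hold.
   Context: An $m$-adic expansion of $t\in(0,1)$ is a sequence $(t_k)\in\{0,1,\dots,m-1\}^{\mathbb{N}}$ with $t=\sum_{k\geq1}t_k m^{-k}$. Such an expansion is universal if for every $k\geq1$ and every word $x_1\cdots x_k\in\{0,\dots,m-1\}^k$ there is $k_0\in\mathbb{N}$ with $t_{k_0+1}\cdots t_{k_0+k}=x_1\cdots x_k$; $t$ has a universal $m$-adic expansion if some $m$-adic expansion of it is universal. Notation: $A\pm t=\{x\pm t:x\in A\}$, $tA=\{tx:x\in A\setminus\{0\}\}$, $\frac{A}{t}=t^{-1}A=\{t^{-1}x:x\in A\setminus\{0\}\}$. $\mathbb{Q}^c$ denotes the set of irrational real numbers. *)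

theory Defs
  imports "HOL-Analysis.Analysis"
begin

text \<open>An m-adic expansion of t: a digit sequence d (digits d 1, d 2, ... ; d 0 unused)
  with digits in {0,..,m-1} and t = sum_{k>=1} d k / m^k.\<close>
definition madic_expansion :: "nat \<Rightarrow> (nat \<Rightarrow> nat) \<Rightarrow> real \<Rightarrow> bool" where
  "madic_expansion m d t \<longleftrightarrow>
     (\<forall>k\<ge>1. d k < m) \<and> (\<lambda>k. real (d (Suc k)) / real m ^ Suc k) sums t"

definition universal_expansion :: "nat \<Rightarrow> (nat \<Rightarrow> nat) \<Rightarrow> bool" where
  "universal_expansion m d \<longleftrightarrow>
     (\<forall>w :: nat list. length w \<ge> 1 \<longrightarrow> set w \<subseteq> {..<m} \<longrightarrow>
        (\<exists>k0. \<forall>i<length w. d (k0 + Suc i) = w ! i))"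

definition has_universal_expansion :: "nat \<Rightarrow> real \<Rightarrow> bool" where
  "has_universal_expansion m t \<longleftrightarrow>
     (\<exists>d. madic_expansion m d t \<and> universal_expansion m d)"

definition Tmap :: "nat \<Rightarrow> real \<Rightarrow> real" where
  "Tmap m x = frac (real m * x)"

definition nowhere_dense :: "real set \<Rightarrow> bool" where
  "nowhere_dense A \<longleftrightarrow> interior (closure A) = {}"

end

theory Submission
  imports Defs
begin


fun enc :: "nat \<Rightarrow> nat list \<Rightarrow> nat" where
  "enc m [] = 0"
| "enc m (a # w) = a * m ^ length w + enc m w"

lemma enc_exists:
  assumes "m \<ge> 1" "c < m ^ L"
  shows "\<exists>w. length w = L \<and> set w \<subseteq> {..<m} \<and> enc m w = c"
  using assms(2)
proof (induction L arbitrary: c)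
  case 0 then show ?case by auto
next
  case (Suc L)
  have pos: "m ^ L > 0" using assms(1) by simp
  obtain w where w: "length w = L" "set w \<subseteq> {..<m}" "enc m w = c mod m ^ L"
    using Suc.IH[of "c mod m ^ L"] pos by auto
  have "c div m ^ L < m" using Suc.prems
    by (intro less_mult_imp_div_less) (simp add: mult.commute)
  moreover have "c = c div m ^ L * m ^ L + c mod m ^ L" by (rule div_mult_mod_eq[symmetric])
  ultimately show ?case using w
    by (intro exI[of _ "(c div m ^ L) # w"]) auto
qed

lemma enc_sum:
  assumes "m \<ge> 1"
  shows "(\<Sum>i<length w. real (w ! i) / real m ^ Suc i) = real (enc m w) / real m ^ length w"
proof (induction w)
  case Nil then show ?case by simp
next
  case (Cons a w)
  have mp: "real m > 0" using assms by simp
  have "(\<Sum>i<length (a#w). real ((a#w) ! i) / real m ^ Suc i)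
        = real a / real m + (\<Sum>i<length w. real (w ! i) / real m ^ Suc (Suc i))"
    unfolding length_Cons sum.lessThan_Suc_shift by simp
  also have "(\<Sum>i<length w. real (w ! i) / real m ^ Suc (Suc i))
        = (\<Sum>i<length w. real (w ! i) / real m ^ Suc i) / real m"
    by (simp add: sum_divide_distrib field_simps)
  also have "real a / real m + \<dots> = real (enc m (a#w)) / real m ^ length (a#w)"
    using Cons mp by (simp add: field_simps)
  finally show ?case .
qed

definition tail :: "nat \<Rightarrow> (nat \<Rightarrow> nat) \<Rightarrow> nat \<Rightarrow> real" where
  "tail m d k = (\<Sum>i. real (d (k + Suc i)) / real m ^ Suc i)"

lemma geom_sum_m:
  assumes "m \<ge> 2"
  shows "summable (\<lambda>i. (real m - 1) / real m ^ Suc i)"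
    and "(\<Sum>i. (real m - 1) / real m ^ Suc i) = 1"
proof -
  have m: "real m \<ge> 2" using assms by simp
  have eq: "(\<lambda>i. (real m - 1) / real m ^ Suc i) = (\<lambda>i. ((real m - 1) / real m) * (1 / real m) ^ i)"
    by (rule ext) (simp add: field_simps power_divide)
  have ab: "norm (1 / real m) < 1" using m by simp
  show "summable (\<lambda>i. (real m - 1) / real m ^ Suc i)"
    unfolding eq using ab by (intro summable_mult summable_geometric) simp
  have "(\<Sum>i. ((real m - 1) / real m) * (1 / real m) ^ i) = ((real m - 1) / real m) * (1 / (1 - 1 / real m))"
    using suminf_mult[OF summable_geometric[OF ab], of "(real m - 1) / real m"] suminf_geometric[OF ab] by simp
  also have "\<dots> = 1" using m by (simp add: field_simps)
  finally show "(\<Sum>i. (real m - 1) / real m ^ Suc i) = 1" unfolding eq .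
qed

lemma tail_summable:
  assumes "m \<ge> 2" "\<forall>k\<ge>1. d k < m"
  shows "summable (\<lambda>i. real (d (k + Suc i)) / real m ^ Suc i)"
proof (rule summable_comparison_test'[OF geom_sum_m(1)[OF assms(1)]])
  fix i :: nat
  have "d (k + Suc i) < m" using assms(2) by simp
  hence "real (d (k + Suc i)) \<le> real m - 1" by linarith
  thus "norm (real (d (k + Suc i)) / real m ^ Suc i) \<le> (real m - 1) / real m ^ Suc i"
    using assms(1) by (simp add: divide_right_mono)
qed

lemma tail_bounds:
  assumes "m \<ge> 2" "\<forall>k\<ge>1. d k < m"
  shows "0 \<le> tail m d k" "tail m d k \<le> 1"
proof -
  show "0 \<le> tail m d k" unfolding tail_def
    by (intro suminf_nonneg tail_summable assms) simp
  have "tail m d k \<le> (\<Sum>i. (real m - 1) / real m ^ Suc i)" unfolding tail_def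
  proof (rule suminf_le[OF _ tail_summable[OF assms] geom_sum_m(1)[OF assms(1)]])
    fix i :: nat
    have "d (k + Suc i) < m" using assms(2) by simp
    hence "real (d (k + Suc i)) \<le> real m - 1" by linarith
    thus "real (d (k + Suc i)) / real m ^ Suc i \<le> (real m - 1) / real m ^ Suc i"
      using assms(1) by (simp add: divide_right_mono)
  qed
  thus "tail m d k \<le> 1" using geom_sum_m(2)[OF assms(1)] by simp
qed

lemma tail_split:
  assumes "m \<ge> 2" "\<forall>k\<ge>1. d k < m"
  shows "tail m d k = (\<Sum>i<L. real (d (k + Suc i)) / real m ^ Suc i) + tail m d (k + L) / real m ^ L"
proof -
  have "tail m d k = (\<Sum>n. real (d (k + Suc (n + L))) / real m ^ Suc (n + L)) + (\<Sum>i<L. real (d (k + Suc i)) / real m ^ Suc i)"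
    unfolding tail_def by (rule suminf_split_initial_segment[OF tail_summable[OF assms]])
  also have "(\<lambda>n. real (d (k + Suc (n + L))) / real m ^ Suc (n + L)) = (\<lambda>n. real (d (k + L + Suc n)) / real m ^ Suc n / real m ^ L)"
    by (rule ext) (simp add: power_add field_simps)
  also have "(\<Sum>n. real (d (k + L + Suc n)) / real m ^ Suc n / real m ^ L) = tail m d (k + L) / real m ^ L"
    unfolding tail_def by (rule suminf_divide[OF tail_summable[OF assms]])
  finally show ?thesis by simp
qed

lemma tail_int:
  assumes "m \<ge> 2" "madic_expansion m d t"
  shows "real m ^ k * t - tail m d k \<in> \<int>"
proof -
  have dig: "\<forall>k\<ge>1. d k < m" and sm: "(\<lambda>k. real (d (Suc k)) / real m ^ Suc k) sums t"
    using assms(2) unfolding madic_expansion_def by auto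
  have t0: "t = tail m d 0" using sm unfolding tail_def by (simp add: sums_iff)
  have mp: "real m > 0" using assms(1) by simp
  have "t = (\<Sum>i<k. real (d (Suc i)) / real m ^ Suc i) + tail m d k / real m ^ k"
    using tail_split[OF assms(1) dig, of 0 k] t0 by simp
  hence "real m ^ k * t - tail m d k = (\<Sum>i<k. real (d (Suc i)) * real m ^ k / real m ^ Suc i)"
    using mp by (simp add: field_simps sum_distrib_left)
  also have "\<dots> = (\<Sum>i<k. real (d (Suc i)) * real m ^ (k - Suc i))"
  proof (rule sum.cong[OF refl])
    fix i assume "i \<in> {..<k}"
    hence "k = (k - Suc i) + Suc i" by simp
    hence "real m ^ k = real m ^ (k - Suc i) * real m ^ Suc i"
      by (metis power_add)
    thus "real (d (Suc i)) * real m ^ k / real m ^ Suc i = real (d (Suc i)) * real m ^ (k - Suc i)"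
      using mp by simp
  qed
  also have "\<dots> \<in> \<int>" by (intro Ints_sum) auto
  finally show ?thesis .
qed

lemma tail_dense:
  assumes m: "m \<ge> 2" and ex: "madic_expansion m d t" and un: "universal_expansion m d"
    and y: "0 < y" "y < 1" and e: "e > 0"
  shows "\<exists>k. \<bar>tail m d k - y\<bar> < e"
proof -
  have dig: "\<forall>k\<ge>1. d k < m" using ex unfolding madic_expansion_def by auto
  have mr: "real m > 1" using m by simp
  obtain n where n: "1 / e < real m ^ n" using real_arch_pow[OF mr] by blast
  define L where "L = Suc n"
  have "real m ^ n \<le> real m ^ L" unfolding L_def using mr by (intro power_increasing) auto
  with n have "1 / e < real m ^ L" by simp
  hence eL: "1 / real m ^ L < e" using e mr by (simp add: field_simps)
  have mL: "real m ^ L > 0" using mr by simp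
  define c where "c = nat \<lfloor>real m ^ L * y\<rfloor>"
  have fl0: "\<lfloor>real m ^ L * y\<rfloor> \<ge> 0" using y mL by simp
  have cle: "real c \<le> real m ^ L * y" unfolding c_def using fl0 by simp
  have cgt: "real m ^ L * y < real c + 1" unfolding c_def using fl0 by linarith
  have "real c < real m ^ L" using cle y mL by (smt (verit) mult_less_cancel_left2)
  hence cl: "c < m ^ L" by (metis of_nat_less_iff of_nat_power)
  obtain w where w: "length w = L" "set w \<subseteq> {..<m}" "enc m w = c"
    using enc_exists[OF _ cl] m by auto
  obtain k0 where k0: "\<forall>i<length w. d (k0 + Suc i) = w ! i"
    using un w unfolding universal_expansion_def L_def by force
  have "tail m d k0 = (\<Sum>i<L. real (d (k0 + Suc i)) / real m ^ Suc i) + tail m d (k0 + L) / real m ^ L"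
    by (rule tail_split[OF m dig])
  also have "(\<Sum>i<L. real (d (k0 + Suc i)) / real m ^ Suc i) = (\<Sum>i<length w. real (w ! i) / real m ^ Suc i)"
    using k0 w(1) by (intro sum.cong) auto
  also have "\<dots> = real c / real m ^ L" using enc_sum[of m w] m w by simp
  finally have tk: "tail m d k0 = (real c + tail m d (k0 + L)) / real m ^ L"
    by (simp add: add_divide_distrib)
  have r: "0 \<le> tail m d (k0 + L)" "tail m d (k0 + L) \<le> 1" using tail_bounds[OF m dig] by auto
  have "\<bar>tail m d k0 - y\<bar> \<le> 1 / real m ^ L"
  proof -
    have "\<bar>real c + tail m d (k0 + L) - real m ^ L * y\<bar> \<le> 1" using cle cgt r by linarith
    hence "\<bar>(real c + tail m d (k0 + L) - real m ^ L * y) / real m ^ L\<bar> \<le> 1 / real m ^ L"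
      using mL by (simp add: divide_right_mono)
    moreover have "(real c + tail m d (k0 + L) - real m ^ L * y) / real m ^ L = tail m d k0 - y"
      using tk mL by (simp add: field_simps)
    ultimately show ?thesis by simp
  qed
  with eL show ?thesis by (intro exI[of _ k0]) linarith
qed

lemma preimage_affine_nowhere:
  fixes C :: "real set"
  assumes "closed C" "interior C = {}" "a \<noteq> 0"
  shows "closed {x. a * x + b \<in> C}" "interior {x. a * x + b \<in> C} = {}"
proof -
  have "closed ((\<lambda>x. a * x + b) -` C)"
    by (intro continuous_closed_vimage assms continuous_intros)
  thus "closed {x. a * x + b \<in> C}" by (simp add: vimage_def)
  define V where "V = interior {x. a * x + b \<in> C}"
  have oV: "open V" unfolding V_def by simp
  have "open ((\<lambda>x. b + a *\<^sub>R x) ` V)" by (rule open_affinity[OF oV assms(3)])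
  moreover have "(\<lambda>x. b + a *\<^sub>R x) ` V \<subseteq> C"
  proof
    fix z assume "z \<in> (\<lambda>x. b + a *\<^sub>R x) ` V"
    then obtain x where x: "x \<in> V" "z = b + a * x" by auto
    hence "x \<in> {x. a * x + b \<in> C}" unfolding V_def using interior_subset by blast
    thus "z \<in> C" using x by (simp add: add.commute)
  qed
  ultimately have "(\<lambda>x. b + a *\<^sub>R x) ` V \<subseteq> interior C" by (rule interior_maximal[rotated])
  thus "interior {x. a * x + b \<in> C} = {}" using assms(2) unfolding V_def by blast
qed

lemma baire_affine:
  fixes A :: "real set" and I :: "'i set"
  assumes fin: "finite I" and nd: "interior (closure A) = {}" and al: "\<forall>i\<in>I. \<alpha> i \<noteq> 0"
    and cov: "\<forall>k. \<exists>i\<in>I. \<alpha> i * s k + \<beta> i \<in> A"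
    and den: "\<forall>y e. 0 < y \<longrightarrow> y < 1 \<longrightarrow> 0 < e \<longrightarrow> (\<exists>k. \<bar>s k - y\<bar> < e)"
  shows False
proof -
  define P where "P i = {x. \<alpha> i * x + \<beta> i \<in> closure A}" for i
  have Pc: "closed (P i)" if "i \<in> I" for i
    unfolding P_def using preimage_affine_nowhere[of "closure A" "\<alpha> i"] nd al that by auto
  have Pi: "interior (P i) = {}" if "i \<in> I" for i
    unfolding P_def using preimage_affine_nowhere[of "closure A" "\<alpha> i"] nd al that by auto
  have "closed (\<Union>i\<in>J. P i) \<and> interior (\<Union>i\<in>J. P i) = {}" if "finite J" "J \<subseteq> I" for J
    using that
  proof (induction J rule: finite_induct)
    case empty then show ?case by simp
  next
    case (insert j J)
    have "interior ((\<Union>i\<in>J. P i) \<union> P j) = interior (\<Union>i\<in>J. P i)"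
      using insert by (intro interior_closed_Un_empty_interior Pi) auto
    moreover have "(\<Union>i\<in>insert j J. P i) = (\<Union>i\<in>J. P i) \<union> P j" by auto
    ultimately show ?case using insert Pc by auto
  qed
  from this[OF fin order_refl] have Fc: "closed (\<Union>i\<in>I. P i)" and Fi: "interior (\<Union>i\<in>I. P i) = {}"
    by auto
  have "range s \<subseteq> (\<Union>i\<in>I. P i)" using cov closure_subset unfolding P_def by fastforce
  hence cl: "closure (range s) \<subseteq> (\<Union>i\<in>I. P i)" using Fc by (rule closure_minimal)
  have "{0<..<1::real} \<subseteq> closure (range s)"
  proof
    fix y :: real assume "y \<in> {0<..<1}"
    hence "0 < y" "y < 1" by auto
    thus "y \<in> closure (range s)" unfolding closure_approachable
      using den by (auto simp: dist_real_def)
  qed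
  with cl have "{0<..<1::real} \<subseteq> interior (\<Union>i\<in>I. P i)"
    by (intro interior_maximal) auto
  with Fi show False by (metis empty_iff greaterThanLessThan_iff less_numeral_extra(1) field_lbound_gt_zero subsetD zero_less_one)
qed

lemma main_contra:
  assumes m: "m \<ge> 2" and ex: "madic_expansion m d t" and un: "universal_expansion m d"
    and nd: "nowhere_dense A" and A: "A \<subseteq> {0..<1}" and a: "a \<noteq> 0" and b: "b > 0"
    and rel: "\<forall>k. \<exists>z\<in>A. b * z - a * tail m d k \<in> \<int>"
  shows False
proof -
  have dig: "\<forall>k\<ge>1. d k < m" using ex unfolding madic_expansion_def by auto
  define K where "K = \<lceil>b + \<bar>a\<bar>\<rceil>"
  show False
  proof (rule baire_affine[of "{-K..K}" A "\<lambda>_. a / b" "tail m d" "\<lambda>p. real_of_int p / b"])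
    show "finite {-K..K}" by simp
    show "interior (closure A) = {}" using nd unfolding nowhere_dense_def .
    show "\<forall>i\<in>{-K..K}. a / b \<noteq> 0" using a b by simp
    show "\<forall>y e. 0 < y \<longrightarrow> y < 1 \<longrightarrow> 0 < e \<longrightarrow> (\<exists>k. \<bar>tail m d k - y\<bar> < e)"
      using tail_dense[OF m ex un] by blast
    show "\<forall>k. \<exists>i\<in>{-K..K}. a / b * tail m d k + real_of_int i / b \<in> A"
    proof
      fix k
      obtain z where z: "z \<in> A" "b * z - a * tail m d k \<in> \<int>" using rel by blast
      then obtain p where p: "b * z - a * tail m d k = real_of_int p" by (auto elim: Ints_cases)
      have z01: "0 \<le> z" "z < 1" using z A by auto
      have s01: "0 \<le> tail m d k" "tail m d k \<le> 1" using tail_bounds[OF m dig] by auto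
      have "\<bar>b * z\<bar> \<le> b" using z01 b by (simp add: abs_mult)
      moreover have "\<bar>a * tail m d k\<bar> \<le> \<bar>a\<bar>" using s01 by (simp add: abs_mult mult_left_le)
      ultimately have "\<bar>real_of_int p\<bar> \<le> b + \<bar>a\<bar>" using p by linarith
      hence "\<bar>p\<bar> \<le> K" unfolding K_def by linarith
      hence pK: "p \<in> {-K..K}" by auto
      have "a / b * tail m d k + real_of_int p / b = z" using p b by (simp add: field_simps)
      thus "\<exists>i\<in>{-K..K}. a / b * tail m d k + real_of_int i / b \<in> A" using pK z by auto
    qed
  qed
qed

lemma Tmap_iter:
  assumes "Tmap m ` A \<subseteq> A" "x \<in> A"
  shows "(Tmap m ^^ k) x \<in> A \<and> real m ^ k * x - (Tmap m ^^ k) x \<in> \<int>"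
proof (induction k)
  case 0 then show ?case using assms by simp
next
  case (Suc k)
  define y where "y = (Tmap m ^^ k) x"
  have yA: "y \<in> A" and yi: "real m ^ k * x - y \<in> \<int>" using Suc unfolding y_def by auto
  have "(Tmap m ^^ Suc k) x = Tmap m y" by (simp add: y_def)
  moreover have "Tmap m y \<in> A" using yA assms(1) by blast
  moreover have "real m ^ Suc k * x - Tmap m y = real m * (real m ^ k * x - y) + (real m * y - Tmap m y)"
    by (simp add: algebra_simps)
  moreover have "real m * y - Tmap m y \<in> \<int>" unfolding Tmap_def frac_def by simp
  moreover have "real m * (real m ^ k * x - y) + (real m * y - Tmap m y) \<in> \<int>"
    using yi \<open>real m * y - Tmap m y \<in> \<int>\<close> by (intro Ints_add Ints_mult) auto
  ultimately show ?case by metis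
qed

lemma part1:
  assumes m: "m \<ge> 2" and A: "A \<subseteq> {0..<1}" and nd: "nowhere_dense A" and TA: "Tmap m ` A \<subseteq> A"
    and t: "0 < t" "t < 1" and hu: "has_universal_expansion m t"
  shows "(\<forall>x\<in>A. x - t \<notin> \<rat>) \<and> (\<forall>x\<in>A. x + t \<notin> \<rat>) \<and> (\<forall>x\<in>A. x \<noteq> 0 \<longrightarrow> x / t \<notin> \<rat>)"
proof -
  obtain d where ex: "madic_expansion m d t" and un: "universal_expansion m d"
    using hu unfolding has_universal_expansion_def by blast
  note MC = main_contra[OF m ex un nd A]
  have TI: "(Tmap m ^^ k) x \<in> A" "real m ^ k * x - (Tmap m ^^ k) x \<in> \<int>" if "x \<in> A" for x k
    using Tmap_iter[OF TA that] by auto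
  have SI: "real m ^ k * t - tail m d k \<in> \<int>" for k by (rule tail_int[OF m ex])
  have mk: "real m ^ k \<in> \<int>" for k by simp
  have c1: "x - t \<notin> \<rat>" if x: "x \<in> A" for x
  proof
    assume "x - t \<in> \<rat>"
    then obtain a b :: int where b: "b > 0" and q: "x - t = of_int a / of_int b" by (metis Rats_cases')
    have bq: "real_of_int b * (x - t) = real_of_int a" using q b by simp
    show False
    proof (rule MC[of "real_of_int b" "real_of_int b"])
      show "real_of_int b \<noteq> 0" "real_of_int b > 0" using b by auto
      show "\<forall>k. \<exists>z\<in>A. real_of_int b * z - real_of_int b * tail m d k \<in> \<int>"
      proof
        fix k
        define z where "z = (Tmap m ^^ k) x"
        have "real_of_int b * z - real_of_int b * tail m d k =
          - (real_of_int b * (real m ^ k * x - z)) + real m ^ k * (real_of_int b * (x - t))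
          + real_of_int b * (real m ^ k * t - tail m d k)" by (simp add: algebra_simps)
        also have "\<dots> \<in> \<int>" unfolding bq z_def using TI[OF x, of k] SI[of k]
          by (intro Ints_add Ints_minus Ints_mult) auto
        finally show "\<exists>z\<in>A. real_of_int b * z - real_of_int b * tail m d k \<in> \<int>"
          using TI[OF x, of k] unfolding z_def by blast
      qed
    qed
  qed
  have c2: "x + t \<notin> \<rat>" if x: "x \<in> A" for x
  proof
    assume "x + t \<in> \<rat>"
    then obtain a b :: int where b: "b > 0" and q: "x + t = of_int a / of_int b" by (metis Rats_cases')
    have bq: "real_of_int b * (x + t) = real_of_int a" using q b by simp
    show False
    proof (rule MC[of "- real_of_int b" "real_of_int b"])
      show "- real_of_int b \<noteq> 0" "real_of_int b > 0" using b by auto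
      show "\<forall>k. \<exists>z\<in>A. real_of_int b * z - - real_of_int b * tail m d k \<in> \<int>"
      proof
        fix k
        define z where "z = (Tmap m ^^ k) x"
        have "real_of_int b * z - - real_of_int b * tail m d k =
          - (real_of_int b * (real m ^ k * x - z)) + real m ^ k * (real_of_int b * (x + t))
          + real_of_int (- b) * (real m ^ k * t - tail m d k)" by (simp add: algebra_simps)
        also have "\<dots> \<in> \<int>" unfolding bq z_def using TI[OF x, of k] SI[of k]
          by (intro Ints_add Ints_minus Ints_mult) auto
        finally show "\<exists>z\<in>A. real_of_int b * z - - real_of_int b * tail m d k \<in> \<int>"
          using TI[OF x, of k] unfolding z_def by blast
      qed
    qed
  qed
  have c3: "x / t \<notin> \<rat>" if x: "x \<in> A" and x0: "x \<noteq> 0" for x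
  proof
    assume "x / t \<in> \<rat>"
    then obtain a b :: int where b: "b > 0" and q: "x / t = of_int a / of_int b" by (metis Rats_cases')
    have bq: "real_of_int b * x = real_of_int a * t" using q b t by (simp add: field_simps)
    have a0: "real_of_int a \<noteq> 0" using bq b x0 by auto
    show False
    proof (rule MC[of "real_of_int a" "real_of_int b"])
      show "real_of_int a \<noteq> 0" "real_of_int b > 0" using a0 b by auto
      show "\<forall>k. \<exists>z\<in>A. real_of_int b * z - real_of_int a * tail m d k \<in> \<int>"
      proof
        fix k
        define z where "z = (Tmap m ^^ k) x"
        have "real_of_int b * z - real_of_int a * tail m d k =
          - (real_of_int b * (real m ^ k * x - z)) + real m ^ k * (real_of_int b * x - real_of_int a * t)
          + real_of_int a * (real m ^ k * t - tail m d k)" by (simp add: algebra_simps)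
        also have "\<dots> \<in> \<int>" unfolding bq z_def using TI[OF x, of k] SI[of k]
          by (intro Ints_add Ints_minus Ints_mult) auto
        finally show "\<exists>z\<in>A. real_of_int b * z - real_of_int a * tail m d k \<in> \<int>"
          using TI[OF x, of k] unfolding z_def by blast
      qed
    qed
  qed
  show ?thesis using c1 c2 c3 by blast
qed

definition dg :: "nat \<Rightarrow> real \<Rightarrow> nat \<Rightarrow> nat" where
  "dg m t i = nat (\<lfloor>real m ^ i * t\<rfloor> mod int m)"

lemma floor_pow_div:
  assumes "m \<ge> 1"
  shows "\<lfloor>real m ^ k * t\<rfloor> = \<lfloor>real m ^ (k + j) * t\<rfloor> div (int m ^ j)"
proof -
  have "real m ^ k * t = (real m ^ (k + j) * t) / real_of_int (int m ^ j)"
    using assms by (simp add: power_add)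
  thus ?thesis using floor_divide_real_eq_div[of "int m ^ j" "real m ^ (k + j) * t"] by simp
qed

lemma dg_sum:
  assumes m: "m \<ge> 2"
  shows "(\<Sum>k<n. real (dg m t (Suc k)) / real m ^ Suc k) = real_of_int \<lfloor>real m ^ n * t\<rfloor> / real m ^ n - real_of_int \<lfloor>t\<rfloor>"
proof (induction n)
  case 0 then show ?case by simp
next
  case (Suc n)
  define N where "N = \<lfloor>real m ^ Suc n * t\<rfloor>"
  have fl: "\<lfloor>real m ^ n * t\<rfloor> = N div int m" unfolding N_def using floor_pow_div[of m n t 1] m by simp
  have dgN: "int (dg m t (Suc n)) = N mod int m" unfolding dg_def N_def using m by simp
  have "N = int m * (N div int m) + N mod int m" by simp
  hence eq: "real_of_int N = real m * real_of_int \<lfloor>real m ^ n * t\<rfloor> + real (dg m t (Suc n))"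
    using fl dgN by (metis of_int_add of_int_mult of_int_of_nat_eq)
  have mp: "real m > 0" using m by simp
  have e2: "real_of_int N / real m ^ Suc n = real_of_int \<lfloor>real m ^ n * t\<rfloor> / real m ^ n + real (dg m t (Suc n)) / real m ^ Suc n"
    unfolding eq using mp by (simp add: field_simps)
  show ?case using Suc e2 unfolding N_def by simp
qed

lemma canon_exp:
  assumes m: "m \<ge> 2" and t: "0 \<le> t" "t < 1"
  shows "madic_expansion m (dg m t) t"
  unfolding madic_expansion_def
proof
  show "\<forall>k\<ge>1. dg m t k < m" unfolding dg_def using m
    by (auto simp: nat_less_iff)
  have ft: "\<lfloor>t\<rfloor> = 0" using t by (simp add: floor_eq_iff)
  have mp: "real m > 1" using m by simp
  have "(\<lambda>n. real_of_int \<lfloor>real m ^ n * t\<rfloor> / real m ^ n) \<longlonglongrightarrow> t"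
  proof (rule real_tendsto_sandwich)
    show "\<forall>\<^sub>F n in sequentially. t - 1 / real m ^ n \<le> real_of_int \<lfloor>real m ^ n * t\<rfloor> / real m ^ n"
    proof (intro always_eventually allI)
      fix n :: nat
      have "real m ^ n * t - 1 \<le> real_of_int \<lfloor>real m ^ n * t\<rfloor>" by linarith
      hence "(real m ^ n * t - 1) / real m ^ n \<le> real_of_int \<lfloor>real m ^ n * t\<rfloor> / real m ^ n"
        using mp by (intro divide_right_mono) auto
      moreover have "(real m ^ n * t - 1) / real m ^ n = t - 1 / real m ^ n"
        using mp by (simp add: field_simps)
      ultimately show "t - 1 / real m ^ n \<le> real_of_int \<lfloor>real m ^ n * t\<rfloor> / real m ^ n" by simp
    qed
    show "\<forall>\<^sub>F n in sequentially. real_of_int \<lfloor>real m ^ n * t\<rfloor> / real m ^ n \<le> t"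
    proof (intro always_eventually allI)
      fix n :: nat
      have "real_of_int \<lfloor>real m ^ n * t\<rfloor> \<le> real m ^ n * t" by linarith
      thus "real_of_int \<lfloor>real m ^ n * t\<rfloor> / real m ^ n \<le> t"
        using mp by (simp add: field_simps)
    qed
    have "(\<lambda>n. t - 1 / real m ^ n) \<longlonglongrightarrow> t - 0"
      by (intro tendsto_diff tendsto_const LIMSEQ_divide_realpow_zero mp)
    thus "(\<lambda>n. t - 1 / real m ^ n) \<longlonglongrightarrow> t" by simp
  qed simp
  thus "(\<lambda>k. real (dg m t (Suc k)) / real m ^ Suc k) sums t"
    unfolding sums_def dg_sum[OF m] ft by simp
qed

lemma enc_bound:
  assumes "set w \<subseteq> {..<m}"
  shows "enc m w < m ^ length w"
  using assms
proof (induction w)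
  case Nil then show ?case by simp
next
  case (Cons a w)
  have a: "a + 1 \<le> m" using Cons.prems by auto
  have "enc m (a # w) = a * m ^ length w + enc m w" by simp
  also have "\<dots> < a * m ^ length w + m ^ length w" using Cons by auto
  also have "\<dots> = (a + 1) * m ^ length w" by simp
  also have "\<dots> \<le> m * m ^ length w" using a by (intro mult_right_mono) auto
  finally show ?case by simp
qed

lemma enc_inj:
  assumes "length v = length w" "set v \<subseteq> {..<m}" "set w \<subseteq> {..<m}" "enc m v = enc m w"
  shows "v = w"
  using assms
proof (induction v arbitrary: w)
  case Nil then show ?case by simp
next
  case (Cons a v)
  then obtain b w' where w: "w = b # w'" by (cases w) auto
  have len: "length v = length w'" using Cons.prems w by simp
  have bv: "enc m v < m ^ length v" "enc m w' < m ^ length v"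
    using enc_bound[of v m] enc_bound[of w' m] Cons.prems w len by auto
  have eq: "a * m ^ length v + enc m v = b * m ^ length v + enc m w'"
    using Cons.prems(4) w len by simp
  have Mp: "m ^ length v \<noteq> 0" using bv(1) by (metis less_nat_zero_code)
  have "(a * m ^ length v + enc m v) div m ^ length v = a" using bv Mp
    by (metis add.commute add_cancel_right_right div_less div_mult_self1)
  moreover have "(b * m ^ length v + enc m w') div m ^ length v = b" using bv Mp
    by (metis add.commute add_cancel_right_right div_less div_mult_self1)
  ultimately have ab: "a = b" using eq by simp
  hence "enc m v = enc m w'" using eq by simp
  hence "v = w'" using Cons.IH[of w'] len Cons.prems w by auto
  thus ?case using ab w by simp
qed

lemma window:
  assumes m: "m \<ge> 2" and t: "0 \<le> t"
  shows "enc m (map (\<lambda>i. dg m t (k + Suc i)) [0..<L]) = nat (\<lfloor>real m ^ (k + L) * t\<rfloor> mod (int m ^ L))"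
proof (induction L arbitrary: k)
  case 0 then show ?case by simp
next
  case (Suc L)
  define N where "N = \<lfloor>real m ^ (k + Suc L) * t\<rfloor>"
  have N0: "N \<ge> 0" unfolding N_def using t by simp
  have f1: "\<lfloor>real m ^ (Suc k) * t\<rfloor> = N div int m ^ L"
    unfolding N_def using floor_pow_div[of m "Suc k" t L] m by simp
  have "map (\<lambda>i. dg m t (k + Suc i)) [0..<Suc L] = dg m t (Suc k) # map (\<lambda>i. dg m t (Suc k + Suc i)) [0..<L]"
    unfolding map_upt_Suc by simp
  hence "enc m (map (\<lambda>i. dg m t (k + Suc i)) [0..<Suc L]) = dg m t (Suc k) * m ^ L + nat (N mod (int m ^ L))"
    using Suc.IH[of "Suc k"] unfolding N_def by simp
  also have "int \<dots> = (N div int m ^ L) mod int m * int m ^ L + N mod (int m ^ L)"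
    unfolding dg_def f1 using m N0 by (simp add: of_nat_mult)
  also have "\<dots> = N mod (int m ^ Suc L)"
    using zmod_zmult2_eq[of "int m" N "int m ^ L"] m by (simp add: algebra_simps)
  finally show ?case unfolding N_def
    by (metis N0 N_def nat_int)
qed



lemma emeasure_affine_preimage:
  fixes S :: "real set"
  assumes S: "S \<in> sets borel" and c: "c \<noteq> 0"
  shows "emeasure lborel S = ennreal \<bar>c\<bar> * emeasure lborel {x. b + c * x \<in> S}"
proof -
  have "emeasure lborel S = emeasure (density (distr lborel borel (\<lambda>x. b + c * x)) (\<lambda>_. ennreal \<bar>c\<bar>)) S"
    using lborel_real_affine[OF c, of b] by simp
  also have "\<dots> = (\<integral>\<^sup>+ x. ennreal \<bar>c\<bar> * indicator S x \<partial>(distr lborel borel (\<lambda>x. b + c * x)))"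
    using S by (intro emeasure_density) auto
  also have "\<dots> = ennreal \<bar>c\<bar> * emeasure (distr lborel borel (\<lambda>x. b + c * x)) S"
    using S by (intro nn_integral_cmult_indicator) auto
  also have "emeasure (distr lborel borel (\<lambda>x. b + c * x)) S = emeasure lborel ((\<lambda>x. b + c * x) -` S \<inter> space lborel)"
    using S by (intro emeasure_distr) auto
  also have "(\<lambda>x. b + c * x) -` S \<inter> space lborel = {x. b + c * x \<in> S}" by auto
  finally show ?thesis .
qed

lemma measure_affine_preimage:
  fixes S :: "real set"
  assumes S: "S \<in> sets borel" and c: "c \<noteq> 0" and fin: "emeasure lborel S \<noteq> \<infinity>"
  shows "measure lborel {x. b + c * x \<in> S} = measure lborel S / \<bar>c\<bar>"
proof -
  have e: "emeasure lborel S = ennreal \<bar>c\<bar> * emeasure lborel {x. b + c * x \<in> S}"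
    by (rule emeasure_affine_preimage[OF S c])
  have fin2: "emeasure lborel {x. b + c * x \<in> S} \<noteq> \<infinity>"
    using fin c e by (auto simp: ennreal_mult_eq_top_iff)
  have "measure lborel S = \<bar>c\<bar> * measure lborel {x. b + c * x \<in> S}"
    unfolding measure_def e by (simp add: enn2real_mult)
  thus ?thesis using c by simp
qed

definition Nset :: "nat \<Rightarrow> nat \<Rightarrow> nat \<Rightarrow> real set" where
  "Nset m L c = {t. 0 \<le> t \<and> t < 1 \<and> (\<forall>k. nat (\<lfloor>real m ^ (k + L) * t\<rfloor> mod int m ^ L) \<noteq> c)}"

lemma Nset_sets: "Nset m L c \<in> sets borel"
proof -
  have "Nset m L c = {0..<1} \<inter> (\<Inter>k. {t::real. nat (\<lfloor>real m ^ (k + L) * t\<rfloor> mod int m ^ L) \<noteq> c})"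
    unfolding Nset_def by auto
  also have "\<dots> \<in> sets borel" by measurable
  finally show ?thesis .
qed

lemma Nset_null:
  assumes m: "m \<ge> 2" and L: "L \<ge> 1" and c: "c < m ^ L"
  shows "Nset m L c \<in> null_sets lborel"
proof -
  define N where "N = Nset m L c"
  define M where "M = m ^ L"
  have Mr: "real M \<ge> 2"
  proof -
    have "m ^ 1 \<le> m ^ L" using L m by (intro power_increasing) auto
    thus ?thesis unfolding M_def using m by (metis of_nat_le_iff of_nat_numeral order_trans power_one_right)
  qed
  have Ns[measurable]: "N \<in> sets borel" unfolding N_def by (rule Nset_sets)
  have N01: "N \<subseteq> {0..1}" unfolding N_def Nset_def by auto
  have Nfin: "emeasure lborel N \<noteq> \<infinity>"
  proof -
    have "emeasure lborel N \<le> emeasure lborel {0..1::real}" using N01 by (intro emeasure_mono) auto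
    thus ?thesis by (auto simp: top_unique)
  qed
  define C where "C = {0..<M} - {c}"
  define P where "P c' = {x. - real c' + real M * x \<in> N}" for c'
  have Ps[measurable]: "P c' \<in> sets borel" for c' unfolding P_def by measurable
  have mP: "measure lborel (P c') = measure lborel N / real M" for c'
    unfolding P_def using measure_affine_preimage[OF Ns _ Nfin, of "real M" "- real c'"] Mr by simp
  have PC: "P c' \<subseteq> {0..1}" if "c' \<in> C" for c'
  proof
    fix x assume "x \<in> P c'"
    hence y: "0 \<le> - real c' + real M * x" "- real c' + real M * x \<le> 1" using N01 unfolding P_def by auto
    have cM: "real c' + 1 \<le> real M" using that unfolding C_def by auto
    have Mp: "real M > 0" using Mr by simp
    have "0 \<le> real M * x" using y by simp
    hence x0: "0 \<le> x" using Mp by (simp add: zero_le_mult_iff)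
    have "real M * x \<le> real M" using y cM by linarith
    hence x1: "x \<le> 1" using Mp by (simp add: mult_le_cancel_left1)
    show "x \<in> {0..1}" using x0 x1 by simp
  qed
  have cov: "N \<subseteq> (\<Union>c'\<in>C. P c')"
  proof
    fix t assume tN: "t \<in> N"
    hence t: "0 \<le> t" "t < 1" and nk: "\<forall>k. nat (\<lfloor>real m ^ (k + L) * t\<rfloor> mod int m ^ L) \<noteq> c"
      unfolding N_def Nset_def by auto
    define F where "F = \<lfloor>real M * t\<rfloor>"
    have F0: "0 \<le> F" unfolding F_def using t by simp
    have "real M * t < real M" using t Mr by simp
    hence FM: "F < int M" unfolding F_def by linarith
    define c' where "c' = nat F"
    have "F mod int m ^ L = F" using F0 FM unfolding M_def by simp
    hence "nat F \<noteq> c" using nk[rule_format, of 0] unfolding F_def M_def by simp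
    hence cC: "c' \<in> C" unfolding C_def c'_def using FM F0 by auto
    define s where "s = - real c' + real M * t"
    have rc: "real c' = real_of_int F" unfolding c'_def using F0 by simp
    have s01: "0 \<le> s" "s < 1" unfolding s_def rc F_def by linarith+
    have "\<forall>k. nat (\<lfloor>real m ^ (k + L) * s\<rfloor> mod int m ^ L) \<noteq> c"
    proof
      fix k
      have "real m ^ (k + L) * s = real m ^ (k + L + L) * t - real_of_int (int c' * int m ^ (k + L))"
        unfolding s_def M_def by (simp add: algebra_simps power_add)
      hence fl: "\<lfloor>real m ^ (k + L) * s\<rfloor> = \<lfloor>real m ^ (k + L + L) * t\<rfloor> - int c' * int m ^ (k + L)"
        by (metis floor_diff_of_int)
      have dv: "int m ^ L dvd int c' * int m ^ (k + L)" by (simp add: power_add)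
      have "\<lfloor>real m ^ (k + L) * s\<rfloor> mod int m ^ L = \<lfloor>real m ^ (k + L + L) * t\<rfloor> mod int m ^ L"
        unfolding fl using dv by (metis dvd_imp_mod_0 mod_diff_right_eq diff_zero)
      thus "nat (\<lfloor>real m ^ (k + L) * s\<rfloor> mod int m ^ L) \<noteq> c" using nk[rule_format, of "k + L"] by simp
    qed
    hence "s \<in> N" using s01 unfolding N_def Nset_def by auto
    hence "t \<in> P c'" unfolding P_def s_def by simp
    thus "t \<in> (\<Union>c'\<in>C. P c')" using cC by blast
  qed
  have finC: "finite C" unfolding C_def by simp
  have cardC: "card C = M - 1" unfolding C_def using c M_def by simp
  have Uf: "(\<Union>c'\<in>C. P c') \<in> fmeasurable lborel"
  proof -
    have "emeasure lborel (\<Union>c'\<in>C. P c') \<le> emeasure lborel {0..1::real}"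
      using PC by (intro emeasure_mono) auto
    hence "emeasure lborel (\<Union>c'\<in>C. P c') < \<infinity>" by (simp add: le_less_trans)
    moreover have "(\<Union>c'\<in>C. P c') \<in> sets lborel" using finC by auto
    ultimately show ?thesis unfolding fmeasurable_def by simp
  qed
  have "measure lborel N \<le> measure lborel (\<Union>c'\<in>C. P c')"
    using cov Uf by (intro measure_mono_fmeasurable) auto
  also have "\<dots> \<le> (\<Sum>c'\<in>C. measure lborel (P c'))" using finC by (intro measure_UNION_le) auto
  also have "\<dots> = real (M - 1) * (measure lborel N / real M)" unfolding mP using cardC by simp
  finally have ineq: "measure lborel N \<le> real (M - 1) * (measure lborel N / real M)" .
  have "real (M - 1) = real M - 1" using Mr by (simp add: of_nat_diff)
  with ineq have "measure lborel N * real M \<le> (real M - 1) * measure lborel N"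
    using Mr by (simp add: field_simps)
  hence "measure lborel N \<le> 0" by (simp add: algebra_simps)
  hence m0: "measure lborel N = 0" using measure_nonneg[of lborel N] by linarith
  have "emeasure lborel N = 0" using emeasure_eq_ennreal_measure[of lborel N] Nfin m0 by (simp add: infinity_ennreal_def)
  thus ?thesis unfolding N_def[symmetric] using Ns by (auto simp: null_sets_def)
qed

lemma ae_universal:
  assumes m: "m \<ge> 2"
  shows "AE t in lborel. t \<in> {0<..<1} \<longrightarrow> has_universal_expansion m t"
proof (rule AE_I')
  define J where "J = {(L, c). L \<ge> 1 \<and> c < m ^ L}"
  show "(\<Union>(L, c)\<in>J. Nset m L c) \<in> null_sets lborel"
  proof (rule null_sets_UN')
    show "countable J" by (rule countable_subset[OF subset_UNIV]) simp
    show "\<And>i. i \<in> J \<Longrightarrow> (case i of (L, c) \<Rightarrow> Nset m L c) \<in> null_sets lborel"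
      unfolding J_def using Nset_null[OF m] by auto
  qed
  show "{t \<in> space lborel. \<not> (t \<in> {0<..<1} \<longrightarrow> has_universal_expansion m t)} \<subseteq> (\<Union>(L, c)\<in>J. Nset m L c)"
  proof
    fix t assume "t \<in> {t \<in> space lborel. \<not> (t \<in> {0<..<1} \<longrightarrow> has_universal_expansion m t)}"
    hence t: "0 < t" "t < 1" and nu: "\<not> has_universal_expansion m t" by auto
    have ex: "madic_expansion m (dg m t) t" using canon_exp[OF m] t by simp
    hence "\<not> universal_expansion m (dg m t)" using nu unfolding has_universal_expansion_def by blast
    then obtain w where w: "length w \<ge> 1" "set w \<subseteq> {..<m}"
      and nw: "\<forall>k0. \<not> (\<forall>i<length w. dg m t (k0 + Suc i) = w ! i)"
      unfolding universal_expansion_def by blast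
    define L where "L = length w"
    define c where "c = enc m w"
    have cL: "c < m ^ L" unfolding c_def L_def by (rule enc_bound[OF w(2)])
    have "\<forall>k. nat (\<lfloor>real m ^ (k + L) * t\<rfloor> mod int m ^ L) \<noteq> c"
    proof (intro allI notI)
      fix k assume eq: "nat (\<lfloor>real m ^ (k + L) * t\<rfloor> mod int m ^ L) = c"
      define v where "v = map (\<lambda>i. dg m t (k + Suc i)) [0..<L]"
      have "enc m v = enc m w" using window[OF m, of t k L] t eq unfolding c_def v_def by simp
      moreover have "set v \<subseteq> {..<m}" unfolding v_def dg_def using m by (auto simp: nat_less_iff)
      ultimately have "v = w" using w(2) enc_inj[of v w m] unfolding v_def L_def by simp
      hence "\<forall>i<length w. dg m t (k + Suc i) = w ! i" unfolding v_def L_def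
        by (metis add_0 diff_zero length_map length_upt nth_map nth_upt)
      thus False using nw by blast
    qed
    hence "t \<in> Nset m L c" unfolding Nset_def using t by auto
    moreover have "(L, c) \<in> J" unfolding J_def L_def using w cL L_def by auto
    ultimately show "t \<in> (\<Union>(L, c)\<in>J. Nset m L c)" by blast
  qed
qed


theorem theorem1:
  fixes m :: nat and A :: "real set"
  assumes "m \<ge> 2"
    and "A \<subseteq> {0..<1}"
    and "nowhere_dense A"
    and "Tmap m ` A \<subseteq> A"
  shows "(\<forall>t\<in>{0<..<1}. has_universal_expansion m t \<longrightarrow>
            (\<forall>x\<in>A. x - t \<notin> \<rat>) \<and> (\<forall>x\<in>A. x + t \<notin> \<rat>) \<and>
            (\<forall>x\<in>A. x \<noteq> 0 \<longrightarrow> x / t \<notin> \<rat>))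
       \<and> (\<forall>t\<in>{1<..}. has_universal_expansion m (1 / t) \<longrightarrow>
            (\<forall>x\<in>A. x \<noteq> 0 \<longrightarrow> t * x \<notin> \<rat>))
       \<and> (AE t in lborel. t \<in> {0<..<1} \<longrightarrow>
            (\<forall>x\<in>A. x - t \<notin> \<rat>) \<and> (\<forall>x\<in>A. x + t \<notin> \<rat>) \<and>
            (\<forall>x\<in>A. x \<noteq> 0 \<longrightarrow> x / t \<notin> \<rat>))"
proof (intro conjI)
  note P1 = part1[OF assms]
  show "\<forall>t\<in>{0<..<1}. has_universal_expansion m t \<longrightarrow>
            (\<forall>x\<in>A. x - t \<notin> \<rat>) \<and> (\<forall>x\<in>A. x + t \<notin> \<rat>) \<and>
            (\<forall>x\<in>A. x \<noteq> 0 \<longrightarrow> x / t \<notin> \<rat>)"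
    using P1 by auto
  show "\<forall>t\<in>{1<..}. has_universal_expansion m (1 / t) \<longrightarrow>
            (\<forall>x\<in>A. x \<noteq> 0 \<longrightarrow> t * x \<notin> \<rat>)"
  proof (intro ballI impI)
    fix t x assume t: "t \<in> {1<..}" and hu: "has_universal_expansion m (1 / t)"
      and x: "x \<in> A" "x \<noteq> 0"
    have "0 < 1 / t" "1 / t < 1" using t by auto
    hence "x / (1 / t) \<notin> \<rat>" using P1[OF _ _ hu] x by blast
    thus "t * x \<notin> \<rat>" by (simp add: mult.commute)
  qed
  show "AE t in lborel. t \<in> {0<..<1} \<longrightarrow>
            (\<forall>x\<in>A. x - t \<notin> \<rat>) \<and> (\<forall>x\<in>A. x + t \<notin> \<rat>) \<and>
            (\<forall>x\<in>A. x \<noteq> 0 \<longrightarrow> x / t \<notin> \<rat>)"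
    using ae_universal[OF assms(1)]
  proof (rule AE_mp)
    show "AE t in lborel. (t \<in> {0<..<1} \<longrightarrow> has_universal_expansion m t) \<longrightarrow> (t \<in> {0<..<1} \<longrightarrow>
            (\<forall>x\<in>A. x - t \<notin> \<rat>) \<and> (\<forall>x\<in>A. x + t \<notin> \<rat>) \<and>
            (\<forall>x\<in>A. x \<noteq> 0 \<longrightarrow> x / t \<notin> \<rat>))"
      using P1 by (intro AE_I2) auto
  qed
qed

end
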